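(* Let $n\ge2$, $\mathcal{L}_n=\{(i,j)\in[n]^2:i>j\}$, $\bar n=|\mathcal{L}_n|=n(n-1)/2$. For $\Omega\in[0,1]^{\mathcal{L}_n}$ let $P^{(\bar n)}_\Omega=\bigotimes_{(i,j)\in\mathcal{L}_n}\mathrm{Bern}(\Omega_{i,j})$ be the distribution of $Y=(Y_{i,j})_{(i,j)\in\mathcal{L}_n}\in\{0,1\}^{\mathcal{L}_n}$, and let $q^\natural(\Omega,Y)=\prod_{(i,j)\in\mathcal{L}_n}e^{-(Y_{i,j}-\Omega_{i,j})^2}$. Let $\bar\rho>0$. Then for all $\Omega_0,\Omega_1\in[0,1]^{\mathcal{L}_n}$, $$P^{(\bar n)}_{\Omega_0}\Big(\frac{q^\natural(\Omega_1,Y)}{q^\natural(\Omega_0,Y)}\Big)\le e^{-\frac12\bar nd^2(\Omega_0,\Omega_1)},\qquad P^{(\bar n)}_{\Omega_0}\Big(\frac{q^\natural(\Omega_0,Y)}{q^\natural(\Omega_1,Y)}\Big)^{\bar\rho}\le e^{\frac{\bar\rho(\bar\rho+2)}{2}\bar nd^2(\Omega_0,\Omega_1)},$$ where $d(\Omega_0,\Omega_1)=\big(\frac{2}{n(n-1)}\sum_{(i,j)\in\mathcal{L}_n}(\Omega_{0,i,j}-\Omega_{1,i,j})^2\big)^{1/2}$.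
   Context: $P g$ denotes the expectation of $g$ under $P$. *)

theory Defs
  imports "HOL-Probability.Probability"
begin

definition lowerpairs :: "nat \<Rightarrow> (nat \<times> nat) set" where
  "lowerpairs n = {(i, j). i \<in> {1..n} \<and> j \<in> {1..n} \<and> j < i}"

definition nbar :: "nat \<Rightarrow> real" where
  "nbar n = real (card (lowerpairs n))"

text \<open>Product of Bernoulli(Omega_ij) over L_n; Y_ij = True encodes Y_ij = 1.\<close>
definition P_Omega :: "nat \<Rightarrow> (nat \<times> nat \<Rightarrow> real) \<Rightarrow> (nat \<times> nat \<Rightarrow> bool) pmf" where
  "P_Omega n \<Omega> = Pi_pmf (lowerpairs n) False (\<lambda>ij. bernoulli_pmf (\<Omega> ij))"

definition q_nat :: "nat \<Rightarrow> (nat \<times> nat \<Rightarrow> real) \<Rightarrow> (nat \<times> nat \<Rightarrow> bool) \<Rightarrow> real" where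
  "q_nat n \<Omega> Y = (\<Prod>ij\<in>lowerpairs n. exp (- (of_bool (Y ij) - \<Omega> ij)\<^sup>2))"

definition d_L :: "nat \<Rightarrow> (nat \<times> nat \<Rightarrow> real) \<Rightarrow> (nat \<times> nat \<Rightarrow> real) \<Rightarrow> real" where
  "d_L n \<Omega>0 \<Omega>1 = sqrt (2 / (real n * (real n - 1)) * (\<Sum>ij\<in>lowerpairs n. (\<Omega>0 ij - \<Omega>1 ij)\<^sup>2))"

end

theory Submission
  imports Defs
begin

lemma bern_aux:
  fixes p h :: real assumes "0 \<le> p" "p \<le> 1" "h \<ge> 0"
  shows "p * exp (h * (1 - p)) + (1 - p) * exp (- h * p) \<le> exp (h\<^sup>2 / 8)"
proof -
  have "-h * p + ln (1 + p * (exp h - 1)) \<le> h\<^sup>2 / 8"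
    using Hoeffdings_lemma_aux[of h p] assms by simp
  moreover have pos: "1 + p * (exp h - 1) > 0"
    using assms by (intro add_pos_nonneg mult_nonneg_nonneg) auto
  ultimately have "exp (-h * p + ln (1 + p * (exp h - 1))) \<le> exp (h\<^sup>2 / 8)" by simp
  also have "exp (-h * p + ln (1 + p * (exp h - 1))) = exp (-h*p) * (1 + p * (exp h - 1))"
    using pos by (subst exp_add) simp
  also have "\<dots> = p * exp (h * (1 - p)) + (1 - p) * exp (- h * p)"
    by (simp add: algebra_simps flip: exp_add)
  finally show ?thesis by simp
qed

lemma bern_hoeff:
  fixes p h :: real assumes "0 \<le> p" "p \<le> 1"
  shows "p * exp (h * (1 - p)) + (1 - p) * exp (- h * p) \<le> exp (h\<^sup>2 / 8)"
proof (cases "h \<ge> 0")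
  case True then show ?thesis using bern_aux assms by blast
next
  case False
  have "(1-p) * exp ((-h) * (1 - (1-p))) + (1 - (1-p)) * exp (- (-h) * (1-p)) \<le> exp ((-h)\<^sup>2 / 8)"
    using False assms by (intro bern_aux) auto
  then show ?thesis by (simp add: algebra_simps)
qed

lemma bern_factor:
  fixes p q c :: real assumes "0 \<le> p" "p \<le> 1"
  shows "measure_pmf.expectation (bernoulli_pmf p)
     (\<lambda>b. exp (c * ((of_bool b - q)\<^sup>2 - (of_bool b - p)\<^sup>2))) \<le> exp ((c*c/2 + c) * (p - q)\<^sup>2)"
proof -
  define h where "h = -2 * c * (q - p)"
  have e1: "c * ((1 - q)\<^sup>2 - (1 - p)\<^sup>2) = h * (1 - p) + c * (p - q)\<^sup>2"
    unfolding h_def by (simp add: power2_eq_square algebra_simps)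
  have e0: "c * ((0 - q)\<^sup>2 - (0 - p)\<^sup>2) = - h * p + c * (p - q)\<^sup>2"
    unfolding h_def by (simp add: power2_eq_square algebra_simps)
  have "measure_pmf.expectation (bernoulli_pmf p)
     (\<lambda>b. exp (c * ((of_bool b - q)\<^sup>2 - (of_bool b - p)\<^sup>2)))
     = exp (c * ((1 - q)\<^sup>2 - (1 - p)\<^sup>2)) * p + exp (c * ((0 - q)\<^sup>2 - (0 - p)\<^sup>2)) * (1 - p)"
    using assms by simp
  also have "\<dots> = exp (c * (p - q)\<^sup>2) * (p * exp (h * (1 - p)) + (1 - p) * exp (- h * p))"
    by (simp only: e1 e0 exp_add) (simp add: algebra_simps)
  also have "\<dots> \<le> exp (c * (p - q)\<^sup>2) * exp (h\<^sup>2 / 8)"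
    using bern_hoeff[OF assms] by (intro mult_left_mono) auto
  also have "\<dots> = exp ((c*c/2 + c) * (p - q)\<^sup>2)"
  proof -
    have "c * (p - q)\<^sup>2 + h\<^sup>2 / 8 = (c*c/2 + c) * (p - q)\<^sup>2"
      unfolding h_def by (simp add: power2_eq_square field_simps)
    then show ?thesis by (simp flip: exp_add)
  qed
  finally show ?thesis .
qed

lemma card_lowerpairs: "real (card (lowerpairs n)) = real n * (real n - 1) / 2"
proof (induction n)
  case 0 then show ?case by (simp add: lowerpairs_def)
next
  case (Suc n)
  have eq: "lowerpairs (Suc n) = lowerpairs n \<union> (\<lambda>j. (Suc n, j)) ` {1..n}"
    by (auto simp: lowerpairs_def)
  have fin: "finite (lowerpairs n)"
    by (rule finite_subset[of _ "{1..n} \<times> {1..n}"]) (auto simp: lowerpairs_def)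
  have dis: "lowerpairs n \<inter> (\<lambda>j. (Suc n, j)) ` {1..n} = {}"
    by (auto simp: lowerpairs_def)
  have "card (lowerpairs (Suc n)) = card (lowerpairs n) + n"
    unfolding eq using fin dis by (subst card_Un_disjoint) (auto simp: card_image inj_on_def)
  then show ?case using Suc by (simp add: algebra_simps)
qed

lemma fin_lp: "finite (lowerpairs n)"
  by (rule finite_subset[of _ "{1..n} \<times> {1..n}"]) (auto simp: lowerpairs_def)

lemma main_bound:
  assumes "\<forall>ij\<in>lowerpairs n. \<Omega>0 ij \<in> {0..1}"
  shows "measure_pmf.expectation (P_Omega n \<Omega>0)
     (\<lambda>Y. \<Prod>ij\<in>lowerpairs n. exp (c * ((of_bool (Y ij) - \<Omega>1 ij)\<^sup>2 - (of_bool (Y ij) - \<Omega>0 ij)\<^sup>2)))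
     \<le> exp ((c*c/2 + c) * (\<Sum>ij\<in>lowerpairs n. (\<Omega>0 ij - \<Omega>1 ij)\<^sup>2))"
proof -
  have "measure_pmf.expectation (P_Omega n \<Omega>0)
     (\<lambda>Y. \<Prod>ij\<in>lowerpairs n. exp (c * ((of_bool (Y ij) - \<Omega>1 ij)\<^sup>2 - (of_bool (Y ij) - \<Omega>0 ij)\<^sup>2)))
    = (\<Prod>ij\<in>lowerpairs n. measure_pmf.expectation (bernoulli_pmf (\<Omega>0 ij))
       (\<lambda>b. exp (c * ((of_bool b - \<Omega>1 ij)\<^sup>2 - (of_bool b - \<Omega>0 ij)\<^sup>2))))"
    unfolding P_Omega_def
    by (rule expectation_prod_Pi_pmf[OF fin_lp]) (auto intro!: integrable_measure_pmf_finite)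
  also have "\<dots> \<le> (\<Prod>ij\<in>lowerpairs n. exp ((c*c/2 + c) * (\<Omega>0 ij - \<Omega>1 ij)\<^sup>2))"
    using assms by (intro prod_mono conjI bern_factor integral_nonneg_AE) auto
  also have "\<dots> = exp ((c*c/2 + c) * (\<Sum>ij\<in>lowerpairs n. (\<Omega>0 ij - \<Omega>1 ij)\<^sup>2))"
    by (simp add: exp_sum sum_distrib_left fin_lp)
  finally show ?thesis .
qed

lemma ratio1: "q_nat n \<Omega>1 Y / q_nat n \<Omega>0 Y =
   (\<Prod>ij\<in>lowerpairs n. exp ((-1) * ((of_bool (Y ij) - \<Omega>1 ij)\<^sup>2 - (of_bool (Y ij) - \<Omega>0 ij)\<^sup>2)))"
  unfolding q_nat_def prod_dividef[symmetric]
  by (rule prod.cong) (auto simp: exp_diff[symmetric])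

lemma ratio2: "(q_nat n \<Omega>0 Y / q_nat n \<Omega>1 Y) powr c =
   (\<Prod>ij\<in>lowerpairs n. exp (c * ((of_bool (Y ij) - \<Omega>1 ij)\<^sup>2 - (of_bool (Y ij) - \<Omega>0 ij)\<^sup>2)))"
proof -
  have "q_nat n \<Omega>0 Y / q_nat n \<Omega>1 Y =
   (\<Prod>ij\<in>lowerpairs n. exp ((of_bool (Y ij) - \<Omega>1 ij)\<^sup>2 - (of_bool (Y ij) - \<Omega>0 ij)\<^sup>2))"
    unfolding q_nat_def prod_dividef[symmetric]
    by (rule prod.cong) (auto simp: exp_diff[symmetric])
  also have "\<dots> = exp (\<Sum>ij\<in>lowerpairs n. (of_bool (Y ij) - \<Omega>1 ij)\<^sup>2 - (of_bool (Y ij) - \<Omega>0 ij)\<^sup>2)"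
    by (simp add: exp_sum fin_lp)
  finally have "(q_nat n \<Omega>0 Y / q_nat n \<Omega>1 Y) powr c = exp (c * (\<Sum>ij\<in>lowerpairs n. (of_bool (Y ij) - \<Omega>1 ij)\<^sup>2 - (of_bool (Y ij) - \<Omega>0 ij)\<^sup>2))"
    by (simp add: powr_def)
  also have "\<dots> = (\<Prod>ij\<in>lowerpairs n. exp (c * ((of_bool (Y ij) - \<Omega>1 ij)\<^sup>2 - (of_bool (Y ij) - \<Omega>0 ij)\<^sup>2)))"
    by (simp add: exp_sum sum_distrib_left fin_lp)
  finally show ?thesis .
qed

lemma nbar_d: assumes "n \<ge> 2"
  shows "nbar n * (d_L n \<Omega>0 \<Omega>1)\<^sup>2 = (\<Sum>ij\<in>lowerpairs n. (\<Omega>0 ij - \<Omega>1 ij)\<^sup>2)"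
proof -
  have pos: "real n * (real n - 1) > 0" using assms by simp
  have "(d_L n \<Omega>0 \<Omega>1)\<^sup>2 = 2 / (real n * (real n - 1)) * (\<Sum>ij\<in>lowerpairs n. (\<Omega>0 ij - \<Omega>1 ij)\<^sup>2)"
    unfolding d_L_def using pos by (intro real_sqrt_pow2 mult_nonneg_nonneg sum_nonneg) auto
  moreover have "real n * (real n - 1) / 2 * (2 / (real n * (real n - 1)) * S) = S" for S
  proof -
    define N where "N = real n * (real n - 1)"
    have "N \<noteq> 0" using pos unfolding N_def by linarith
    then have "N / 2 * (2 / N * S) = S" by simp
    then show ?thesis using N_def by simp
  qed
  ultimately show ?thesis unfolding nbar_def card_lowerpairs by simp
qed

theorem lemma7p3:
  fixes n :: nat and \<rho> :: real and \<Omega>0 \<Omega>1 :: "nat \<times> nat \<Rightarrow> real"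
  assumes "n \<ge> 2" and "\<rho> > 0"
    and "\<forall>ij\<in>lowerpairs n. \<Omega>0 ij \<in> {0..1}"
    and "\<forall>ij\<in>lowerpairs n. \<Omega>1 ij \<in> {0..1}"
  shows "measure_pmf.expectation (P_Omega n \<Omega>0) (\<lambda>Y. q_nat n \<Omega>1 Y / q_nat n \<Omega>0 Y)
           \<le> exp (- (1/2) * nbar n * (d_L n \<Omega>0 \<Omega>1)\<^sup>2)
       \<and> measure_pmf.expectation (P_Omega n \<Omega>0) (\<lambda>Y. (q_nat n \<Omega>0 Y / q_nat n \<Omega>1 Y) powr \<rho>)
           \<le> exp (\<rho> * (\<rho> + 2) / 2 * nbar n * (d_L n \<Omega>0 \<Omega>1)\<^sup>2)"
proof
  have e1: "- (1/2) * nbar n * (d_L n \<Omega>0 \<Omega>1)\<^sup>2 = ((-1)*(-1)/2 + (-1)) * (\<Sum>ij\<in>lowerpairs n. (\<Omega>0 ij - \<Omega>1 ij)\<^sup>2)"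
    using nbar_d[OF assms(1)] by (simp add: mult.assoc)
  show "measure_pmf.expectation (P_Omega n \<Omega>0) (\<lambda>Y. q_nat n \<Omega>1 Y / q_nat n \<Omega>0 Y)
           \<le> exp (- (1/2) * nbar n * (d_L n \<Omega>0 \<Omega>1)\<^sup>2)"
    unfolding ratio1 e1 by (rule main_bound[OF assms(3)])
  have e2: "\<rho> * (\<rho> + 2) / 2 * nbar n * (d_L n \<Omega>0 \<Omega>1)\<^sup>2 = (\<rho>*\<rho>/2 + \<rho>) * (\<Sum>ij\<in>lowerpairs n. (\<Omega>0 ij - \<Omega>1 ij)\<^sup>2)"
    using nbar_d[OF assms(1)] by (simp add: field_simps)
  show "measure_pmf.expectation (P_Omega n \<Omega>0) (\<lambda>Y. (q_nat n \<Omega>0 Y / q_nat n \<Omega>1 Y) powr \<rho>)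
           \<le> exp (\<rho> * (\<rho> + 2) / 2 * nbar n * (d_L n \<Omega>0 \<Omega>1)\<^sup>2)"
    unfolding ratio2 e2 by (rule main_bound[OF assms(3)])
qed

end
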